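(* For all $c>0$ and $t>0$, $$\log\Big(1+2c\sinh\frac{t}{2}\Big)\le \frac12\,\frac{t^2+(2c+1)t}{t+1}.$$ *)

theory Defs
  imports Complex_Main
begin

end

theory Submission
  imports Defs
begin

lemma key_poly:
  fixes E s :: real
  assumes E1: "E \<ge> 1" and s0: "s > 0" and sL: "s * E \<ge> E - 1" and nn: "E^2 - 1 - 2*s \<ge> 0"
  shows "(E^2 - 1 - 2*s)^2 \<le> 4 * s^2 * E^3 * (E - 1)"
proof -
  define v where "v = E - 1"
  have v0: "v \<ge> 0" using E1 v_def by simp
  have Ev: "E = 1 + v" using v_def by simp
  define sl where "sl = v / (1 + v)"
  have sl_le: "sl \<le> s" using sL Ev v0 by (simp add: sl_def field_simps)
  have sl0: "sl \<ge> 0" using v0 by (simp add: sl_def)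
  have A: "E^2 - 1 - 2*s \<le> E^2 - 1 - 2*sl" using sl_le by simp
  have B: "(E^2 - 1 - 2*s)^2 \<le> (E^2 - 1 - 2*sl)^2"
    using A nn by (intro power_mono) auto
  have C: "E^2 - 1 - 2*sl = v^2 * (v+3) / (1+v)"
    using v0 by (simp add: Ev sl_def field_simps power2_eq_square)
  have D: "4 * sl^2 * E^3 * (E - 1) = 4 * v^3 * (1 + v)"
  proof -
    have "(1::real) + v > 0" using v0 by simp
    hence "4 * sl^2 * E^3 * (E - 1) = 4 * (v^2 / (1+v)^2) * (1+v)^3 * v"
      by (simp add: Ev sl_def power_divide)
    also have "\<dots> = 4 * v^3 * (1 + v)"
    proof -
      have nz: "(1+v)^2 \<noteq> 0" using \<open>1 + v > 0\<close> by simp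
      have "(1+v)^3 = (1+v)^2*(1+v)" by (simp add: power2_eq_square power3_eq_cube)
      moreover have "v^2/(1+v)^2 * (1+v)^2 = v^2" using nz by simp
      ultimately have "v^2/(1+v)^2 * (1+v)^3 = v^2*(1+v)" by (metis mult.assoc)
      hence "4 * (v^2 / (1+v)^2) * (1+v)^3 * v = 4 * (v^2*(1+v)) * v" by (metis mult.assoc)
      also have "\<dots> = 4 * v^3 * (1 + v)" by (simp add: power2_eq_square power3_eq_cube algebra_simps)
      finally show ?thesis .
    qed
    finally show ?thesis .
  qed
  have P: "v * (v+3)^2 \<le> 4 * (1+v)^3"
  proof -
    have "4 * (1+v)^3 - v * (v+3)^2 = 4 + 3*v + 6*v^2 + 3*v^3"
      by (simp add: power2_eq_square power3_eq_cube algebra_simps)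
    also have "\<dots> \<ge> 0" using v0 by simp
    finally show ?thesis by simp
  qed
  have F: "(v^2 * (v+3) / (1+v))^2 \<le> 4 * v^3 * (1 + v)"
  proof -
    have "(v^2 * (v+3) / (1+v))^2 = v^3 * (v * (v+3)^2) / (1+v)^2"
      by (simp add: power2_eq_square power3_eq_cube field_simps)
    also have "\<dots> \<le> v^3 * (4 * (1+v)^3) / (1+v)^2"
      using P v0 by (intro divide_right_mono mult_left_mono) auto
    also have "\<dots> = 4 * v^3 * (1 + v)"
    proof -
      have nz: "(1+v)^2 \<noteq> 0" using v0 by simp
      have "(1+v)^3 = (1+v)^2*(1+v)" by (simp add: power2_eq_square power3_eq_cube)
      hence "v^3 * (4 * (1+v)^3) = (4 * v^3 * (1+v)) * (1+v)^2"
        by (simp only: mult_ac)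
      hence "v^3 * (4 * (1+v)^3) / (1+v)^2 = (4 * v^3 * (1+v)) * (1+v)^2 / (1+v)^2"
        by (simp only:)
      also have "\<dots> = 4 * v^3 * (1+v)" using nz by (rule nonzero_mult_div_cancel_right)
      finally show ?thesis .
    qed
    finally show ?thesis .
  qed
  have G: "4 * sl^2 * E^3 * (E - 1) \<le> 4 * s^2 * E^3 * (E - 1)"
  proof -
    have "sl^2 \<le> s^2" using sl_le sl0 by (intro power_mono) auto
    moreover have "4 * E^3 * (E - 1) \<ge> 0" using E1 by simp
    ultimately show ?thesis
      using mult_right_mono[of "sl^2" "s^2" "4 * E^3 * (E - 1)"] by (simp add: algebra_simps)
  qed
  show ?thesis using B C D F G by simp
qed

theorem lemma3p6:
  fixes c t :: real
  assumes "c > 0" and "t > 0"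
  shows "ln (1 + 2 * c * sinh (t / 2)) \<le> (1/2) * ((t^2 + (2*c + 1) * t) / (t + 1))"
proof -
  define s where "s = t / 2"
  define E where "E = exp s"
  have s0: "s > 0" using assms by (simp add: s_def)
  have E0: "E > 0" by (simp add: E_def)
  have E1: "E \<ge> 1 + s" unfolding E_def by (rule exp_ge_add_one_self)
  have Einv: "exp (-s) = 1 / E" by (simp add: E_def exp_minus field_simps)
  have sL: "s * E \<ge> E - 1"
  proof -
    have "exp (-s) \<ge> 1 - s" using exp_ge_add_one_self[of "-s"] by simp
    hence "1 / E \<ge> 1 - s" using Einv by simp
    hence "1 \<ge> (1 - s) * E" using E0 by (simp add: field_simps)
    thus ?thesis by (simp add: algebra_simps)
  qed
  have E2: "E^2 \<ge> 1 + 2*s"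
  proof -
    have "E^2 = exp (2*s)" by (simp add: E_def power2_eq_square exp_add[symmetric])
    thus ?thesis using exp_ge_add_one_self[of "2*s"] by simp
  qed
  define a where "a = E - 1/E"
  have sinh_eq: "2 * sinh s = a" by (simp add: sinh_def a_def Einv E_def)
  have a_pos: "a > 0" using E1 s0 E0 by (simp add: a_def field_simps) (smt (verit) mult_le_cancel_left1)
  define u where "u = t / (t + 1)"
  have u_pos: "u > 0" using assms by (simp add: u_def)
  have rhs: "(1/2) * ((t^2 + (2*c + 1) * t) / (t + 1)) = s + c * u"
    using assms by (simp add: s_def u_def field_simps power2_eq_square)
  define w where "w = a / u"
  have w_pos: "w > 0" using a_pos u_pos by (simp add: w_def)
  have w_eq: "w = (E^2 - 1) * (2*s + 1) / (2*s*E)"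
    using assms E0 by (simp add: w_def a_def u_def s_def field_simps power2_eq_square)
  have wE: "w - E = (E^2 - 1 - 2*s) / (2*s*E)"
    using s0 E0 by (simp add: w_eq field_simps power2_eq_square)
  have "(E^2 - 1 - 2*s) / (2*s*E) \<ge> 0" using E2 s0 E0 by (intro divide_nonneg_pos) auto
  hence wE0: "w \<ge> E" using wE by simp
  have kp: "(E^2 - 1 - 2*s)^2 \<le> 4 * s^2 * E^3 * (E - 1)"
    using key_poly[of E s] E1 s0 sL E2 by simp
  have key3: "(w - E)^2 \<le> E^2 - E"
  proof -
    have "(w - E)^2 = (E^2 - 1 - 2*s)^2 / (4 * s^2 * E^2)"
      by (simp add: wE power_divide power_mult_distrib)
    also have "\<dots> \<le> (4 * s^2 * E^3 * (E - 1)) / (4 * s^2 * E^2)"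
      using kp s0 E0 by (intro divide_right_mono) auto
    also have "\<dots> = E^2 - E"
      using s0 E0 by (simp add: field_simps power2_eq_square power3_eq_cube)
    finally show ?thesis .
  qed
  have w2: "w^2 \<le> E * (2*w - 1)"
    using key3 by (simp add: power2_eq_square algebra_simps)
  have w1: "w \<ge> 1" using wE0 E1 s0 by simp
  have key2: "ln w \<le> s + 1 - 1/w"
  proof -
    have pos: "2 - 1/w > 0" using w1 by (simp add: field_simps)
    have "w \<le> E * (2 - 1/w)" using w2 w_pos by (simp add: field_simps power2_eq_square)
    hence "ln w \<le> ln (E * (2 - 1/w))" using w_pos by simp
    also have "\<dots> = s + ln (2 - 1/w)" using pos E0 by (simp add: ln_mult E_def)
    also have "ln (2 - 1/w) \<le> (2 - 1/w) - 1" using pos by (rule ln_le_minus_one)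
    finally show ?thesis by simp
  qed
  have pos1: "1 + c * a > 0" using assms a_pos by (simp add: add_pos_pos)
  have key1: "ln (1 + c*a) \<le> ln w + (1 + c*a)/w - 1"
  proof -
    have "ln ((1 + c*a)/w) \<le> (1 + c*a)/w - 1" using pos1 w_pos by (intro ln_le_minus_one) simp
    moreover have "ln ((1 + c*a)/w) = ln (1 + c*a) - ln w" using pos1 w_pos by (simp add: ln_div)
    ultimately show ?thesis by simp
  qed
  have q: "(1 + c*a)/w = 1/w + c*u"
    using a_pos u_pos by (simp add: w_def field_simps)
  have "ln (1 + 2 * c * sinh (t / 2)) = ln (1 + c*a)"
  proof -
    have "2 * c * sinh (t / 2) = c * (2 * sinh s)" by (simp add: s_def)
    thus ?thesis using sinh_eq by (simp only:)
  qed
  also have "\<dots> \<le> s + c*u" using key1 key2 q by simp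
  finally show ?thesis using rhs by simp
qed

end
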